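(* Let $\mathcal{E}_{\mathrm{MUB}}$ be the minimal Clifford measurement ensemble described in the context, $O$ a Hermitian observable not proportional to the identity, and $O_0=O-2^{-n}\operatorname{tr}(O)\mathbb{I}$. For $U\in\mathcal{E}_{\mathrm{MUB}}$ let $\Phi_{U,\mathbf{b}}=U^{\dagger}|\mathbf{b}\rangle\langle\mathbf{b}|U$, $B_U=\max_{\mathbf{b}\in\{0,1\}^n}|\operatorname{tr}(\Phi_{U,\mathbf{b}}O_0)|$ and $p_U=B_U/\sum_{U'\in\mathcal{E}_{\mathrm{MUB}}}B_{U'}$. Consider the biased-MCM estimator: sample $U$ with probability $p_U$, measure $U\rho U^{\dagger}$ in the computational basis obtaining $\mathbf{b}$ with probability $\langle\mathbf{b}|U\rho U^{\dagger}|\mathbf{b}\rangle$, and output $\hat O=\operatorname{tr}(O_0\Phi_{U,\mathbf{b}})/p_U+2^{-n}\operatorname{tr}(O)$. Then for every state $\rho$, $$\mathrm{Var}(\hat O)\le\Big(\sum_{U\in\mathcal{E}_{\mathrm{MUB}}}B_U\Big)^2\le\mathcal{D}(O_0)^2,$$ where $\mathcal{D}(A)=2^{-n}\sum_{P\in\mathbf{P}^n}|\operatorname{tr}(PA)|$ is the stabilizer norm and $\mathbf{P}^n$ is the set of the $4^n$ $n$-fold tensor products of $\mathbb{I}_2,X,Y,Z$.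
   Context: Galois arithmetic: fix an irreducible polynomial $P_n(x)$ of degree $n$ over $\mathrm{GF}(2)$; integers $a=\sum_i a_i2^i\in\{0,\dots,2^n-1\}$ are identified with polynomials $\sum_ia_ix^i$ and row vectors $(a_0,\dots,a_{n-1})$, and $a\odot b=a(x)b(x)\bmod P_n(x)$. Let $\Gamma_{k,j}$ be the coefficient of $x^j$ in $x^k\bmod P_n$, and $M_n^{(0)}$ the $n\times n$ binary matrix with entries $\Gamma_{p+q,0}$. For $v\in\{0,\dots,2^n-1\}$ let $\alpha_{v,i,j}$ be the $j$-th entry of $(v\odot 2^i)M_n^{(0)}$ mod 2 and $g_i^{(v)}=\sqrt{-1}^{\,\alpha_{v,i,i}}X_i\prod_jZ_j^{\alpha_{v,i,j}}$ ($X_i,Z_i$ Paulis on qubit $i$). $\mathcal{E}_{\mathrm{MUB}}=\{\mathbb{I}\}\cup\{U_v\}_{v=0}^{2^n-1}$, where $U_v$ is a Clifford unitary with $U_v^{\dagger}Z_iU_v=\pm g_i^{(v)}$ for all $i$. Unitaries with $p_U=0$ are never sampled. The variance is over the random $U$ and $\mathbf{b}$. *)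

theory Defs
  imports Complex_Main "Berlekamp_Zassenhaus.Finite_Field"
    "Jordan_Normal_Form.Schur_Decomposition"
begin

type_synonym gf2 = "bool mod_ring"

definition poly_of_nat :: "nat \<Rightarrow> nat \<Rightarrow> gf2 poly" where
  "poly_of_nat n a = (\<Sum>i<n. monom (if bit a i then 1 else 0) i)"

definition Gamma :: "gf2 poly \<Rightarrow> nat \<Rightarrow> nat \<Rightarrow> gf2" where
  "Gamma P k j = coeff (monom 1 k mod P) j"

definition M0 :: "gf2 poly \<Rightarrow> nat \<Rightarrow> nat \<Rightarrow> gf2" where
  "M0 P p q = Gamma P (p + q) 0"

text \<open>alpha v i j = j-th entry of the row vector (v (.) 2^i) M^(0), over GF(2).
  Here v (.) 2^i = v(x) x^i mod P, whose coefficient vector has length n = degree P.\<close>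
definition alpha :: "gf2 poly \<Rightarrow> nat \<Rightarrow> nat \<Rightarrow> nat \<Rightarrow> gf2" where
  "alpha P v i j = (\<Sum>p<degree P. coeff (poly_of_nat (degree P) v * monom 1 i mod P) p * M0 P p j)"

definition trace :: "complex mat \<Rightarrow> complex" where
  "trace A = (\<Sum>i<dim_row A. A $$ (i, i))"

section \<open>n-qubit operators (basis index b, qubit i <-> bit i of b)\<close>

text \<open>X^x Z^z for bit masks x, z: the tensor product of X^(x_i) Z^(z_i).\<close>
definition XZ :: "nat \<Rightarrow> nat \<Rightarrow> nat \<Rightarrow> complex mat" where
  "XZ n x z = mat (2^n) (2^n)
     (\<lambda>(r, c). if r = xor c x then (-1) ^ card {k. k < n \<and> bit c k \<and> bit z k} else 0)"

text \<open>The Pauli string with X-part x and Z-part z: tensor product of I, X, Y = i X Z, Z.\<close>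
definition pauli :: "nat \<Rightarrow> nat \<Rightarrow> nat \<Rightarrow> complex mat" where
  "pauli n x z = (\<i> ^ card {k. k < n \<and> bit x k \<and> bit z k}) \<cdot>\<^sub>m XZ n x z"

definition Paulis :: "nat \<Rightarrow> complex mat set" where
  "Paulis n = {pauli n x z | x z. x < 2^n \<and> z < 2^n}"

definition Xq :: "nat \<Rightarrow> nat \<Rightarrow> complex mat" where
  "Xq n i = pauli n (2^i) 0"

definition Zq :: "nat \<Rightarrow> nat \<Rightarrow> complex mat" where
  "Zq n i = pauli n 0 (2^i)"

definition gf2_to_nat :: "gf2 \<Rightarrow> nat" where
  "gf2_to_nat a = (if a = 1 then 1 else 0)"

definition gen :: "gf2 poly \<Rightarrow> nat \<Rightarrow> nat \<Rightarrow> complex mat" where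
  "gen P v i = (let n = degree P in
     (\<i> ^ gf2_to_nat (alpha P v i i)) \<cdot>\<^sub>m
       (Xq n i * foldr (\<lambda>j M. (Zq n j ^\<^sub>m gf2_to_nat (alpha P v i j)) * M) [0..<n] (1\<^sub>m (2^n))))"

definition unitary_mat :: "nat \<Rightarrow> complex mat \<Rightarrow> bool" where
  "unitary_mat n U \<longleftrightarrow> U \<in> carrier_mat (2^n) (2^n) \<and>
     mat_adjoint U * U = 1\<^sub>m (2^n) \<and> U * mat_adjoint U = 1\<^sub>m (2^n)"

definition clifford :: "nat \<Rightarrow> complex mat \<Rightarrow> bool" where
  "clifford n U \<longleftrightarrow> unitary_mat n U \<and>
     (\<forall>P \<in> Paulis n. \<exists>Q \<in> Paulis n. \<exists>s \<in> {1, -1, \<i>, -\<i>}. U * P * mat_adjoint U = s \<cdot>\<^sub>m Q)"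

definition hermitian_mat :: "nat \<Rightarrow> complex mat \<Rightarrow> bool" where
  "hermitian_mat n A \<longleftrightarrow> A \<in> carrier_mat (2^n) (2^n) \<and> mat_adjoint A = A"

definition density_mat :: "nat \<Rightarrow> complex mat \<Rightarrow> bool" where
  "density_mat n \<rho> \<longleftrightarrow> hermitian_mat n \<rho> \<and> trace \<rho> = 1 \<and>
     (\<forall>v \<in> carrier_vec (2^n). 0 \<le> Re ((\<rho> *\<^sub>v v) \<bullet>c v))"

text \<open>Index set of E_MUB: None is the identity, Some v is U_v, v < 2^n.\<close>
definition Idx :: "nat \<Rightarrow> nat option set" where
  "Idx n = insert None (Some ` {..<2^n})"

definition ens :: "nat \<Rightarrow> (nat \<Rightarrow> complex mat) \<Rightarrow> nat option \<Rightarrow> complex mat" where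
  "ens n U k = (case k of None \<Rightarrow> 1\<^sub>m (2^n) | Some v \<Rightarrow> U v)"

definition proj :: "nat \<Rightarrow> nat \<Rightarrow> complex mat" where
  "proj n b = mat (2^n) (2^n) (\<lambda>(r, c). if r = b \<and> c = b then 1 else 0)"

definition Phi :: "nat \<Rightarrow> complex mat \<Rightarrow> nat \<Rightarrow> complex mat" where
  "Phi n W b = mat_adjoint W * proj n b * W"

definition traceless :: "nat \<Rightarrow> complex mat \<Rightarrow> complex mat" where
  "traceless n Ob = Ob - (trace Ob / 2^n) \<cdot>\<^sub>m 1\<^sub>m (2^n)"

definition Bval :: "nat \<Rightarrow> complex mat \<Rightarrow> complex mat \<Rightarrow> real" where
  "Bval n Ob W = Max ((\<lambda>b. cmod (trace (Phi n W b * traceless n Ob))) ` {..<2^n})"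

definition Bsum :: "nat \<Rightarrow> (nat \<Rightarrow> complex mat) \<Rightarrow> complex mat \<Rightarrow> real" where
  "Bsum n U Ob = (\<Sum>k\<in>Idx n. Bval n Ob (ens n U k))"

definition pU :: "nat \<Rightarrow> (nat \<Rightarrow> complex mat) \<Rightarrow> complex mat \<Rightarrow> nat option \<Rightarrow> real" where
  "pU n U Ob k = Bval n Ob (ens n U k) / Bsum n U Ob"

definition prob :: "nat \<Rightarrow> (nat \<Rightarrow> complex mat) \<Rightarrow> complex mat \<Rightarrow> complex mat
                      \<Rightarrow> nat option \<Rightarrow> nat \<Rightarrow> real" where
  "prob n U Ob \<rho> k b = pU n U Ob k *
     Re ((ens n U k * \<rho> * mat_adjoint (ens n U k)) $$ (b, b))"

text \<open>Estimator output; the traces are real for Hermitian Ob, we take the real part.\<close>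
definition est :: "nat \<Rightarrow> (nat \<Rightarrow> complex mat) \<Rightarrow> complex mat \<Rightarrow> nat option \<Rightarrow> nat \<Rightarrow> real" where
  "est n U Ob k b = Re (trace (traceless n Ob * Phi n (ens n U k) b)) / pU n U Ob k
                   + Re (trace Ob) / 2^n"

text \<open>Sample space: unitaries with p_U = 0 are never sampled.\<close>
definition outcomes :: "nat \<Rightarrow> (nat \<Rightarrow> complex mat) \<Rightarrow> complex mat \<Rightarrow> (nat option \<times> nat) set" where
  "outcomes n U Ob = {k \<in> Idx n. pU n U Ob k > 0} \<times> {..<2^n}"

definition est_mean :: "nat \<Rightarrow> (nat \<Rightarrow> complex mat) \<Rightarrow> complex mat \<Rightarrow> complex mat \<Rightarrow> real" where
  "est_mean n U Ob \<rho> = (\<Sum>(k, b)\<in>outcomes n U Ob. prob n U Ob \<rho> k b * est n U Ob k b)"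

definition est_var :: "nat \<Rightarrow> (nat \<Rightarrow> complex mat) \<Rightarrow> complex mat \<Rightarrow> complex mat \<Rightarrow> real" where
  "est_var n U Ob \<rho> = (\<Sum>(k, b)\<in>outcomes n U Ob.
      prob n U Ob \<rho> k b * (est n U Ob k b - est_mean n U Ob \<rho>)^2)"

definition stab_norm :: "nat \<Rightarrow> complex mat \<Rightarrow> real" where
  "stab_norm n A = (\<Sum>Q\<in>Paulis n. cmod (trace (Q * A))) / 2^n"

end

theory Submission
  imports Defs
begin


lemma CARD_gf2: "CARD(gf2) = 2"
  by (simp add: CARD_mod_ring)

lemma gf2_cases: "(x::gf2) = 0 \<or> x = 1"
proof -
  have "finite (UNIV::gf2 set)" by simp
  have "(0::gf2) \<noteq> 1" by simp
  have "{0,1} \<subseteq> (UNIV::gf2 set)" by simp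
  moreover have "card {0::gf2,1} = 2" by simp
  ultimately have "{0,1} = (UNIV::gf2 set)"
    using CARD_gf2 by (intro card_subset_eq) auto
  then show ?thesis by auto
qed

lemma gf2_one_one: "(1::gf2) + 1 = 0"
proof -
  have "(1::gf2) + 1 \<noteq> 1"
  proof
    assume "(1::gf2) + 1 = 1"
    then have "(1::gf2) = 0" by (metis add_cancel_right_right)
    then show False by simp
  qed
  then show ?thesis using gf2_cases by blast
qed

definition pc :: "nat \<Rightarrow> nat \<Rightarrow> nat \<Rightarrow> nat" where
  "pc n a z = card {k. k < n \<and> bit a k \<and> bit z k}"

lemma pc_comm: "pc n a z = pc n z a"
  unfolding pc_def by (metis (no_types, lifting) Collect_cong)

lemma sgn_pc_xor: "(-1::complex)^pc n (xor a b) z = (-1)^pc n a z * (-1)^pc n b z"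
proof -
  define A where "A = {k. k < n \<and> bit a k \<and> bit z k}"
  define B where "B = {k. k < n \<and> bit b k \<and> bit z k}"
  define X where "X = {k. k < n \<and> bit (xor a b) k \<and> bit z k}"
  have fA: "finite A" unfolding A_def by auto
  have fB: "finite B" unfolding B_def by auto
  have fX: "finite X" unfolding X_def by auto
  have U: "A \<union> B = X \<union> (A \<inter> B)" unfolding A_def B_def X_def by (auto simp: bit_xor_iff)
  have D: "X \<inter> (A \<inter> B) = {}" unfolding A_def B_def X_def by (auto simp: bit_xor_iff)
  have "card A + card B = card (A \<union> B) + card (A \<inter> B)" using card_Un_Int fA fB by blast
  also have "card (A \<union> B) = card X + card (A \<inter> B)" using U D fX fA
    by (simp add: card_Un_disjoint)
  finally have e: "card A + card B = card X + 2 * card (A \<inter> B)" by simp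
  have "(-1::complex)^card A * (-1)^card B = (-1)^(card X + 2 * card (A \<inter> B))"
    by (simp add: power_add[symmetric] e)
  also have "\<dots> = (-1)^card X" by (simp add: power_add power_mult)
  finally show ?thesis unfolding pc_def A_def B_def X_def by simp
qed

lemma sgn_pc_xor2: "(-1::complex)^pc n z (xor a b) = (-1)^pc n z a * (-1)^pc n z b"
  using sgn_pc_xor[of n a b z] by (simp add: pc_comm)

lemma pc_0[simp]: "pc n 0 z = 0" "pc n z 0 = 0"
  unfolding pc_def by auto

lemma XZ_carrier[simp]: "XZ n x z \<in> carrier_mat (2^n) (2^n)"
  unfolding XZ_def by auto

lemma XZ_dims[simp]: "dim_row (XZ n x z) = 2^n" "dim_col (XZ n x z) = 2^n"
  unfolding XZ_def by auto

lemma XZ_index: "r < 2^n \<Longrightarrow> c < 2^n \<Longrightarrow>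
   XZ n x z $$ (r,c) = (if r = xor c x then (-1)^pc n c z else 0)"
  unfolding XZ_def pc_def by auto

lemma xor_lt: "(a::nat) < 2^n \<Longrightarrow> b < 2^n \<Longrightarrow> xor a b < 2^n"
proof -
  assume a: "a < 2^n" and b: "b < 2^n"
  have "take_bit n a = a" "take_bit n b = b" using a b by (simp_all add: take_bit_nat_eq_self_iff)
  then have "take_bit n (xor a b) = xor a b" by (metis take_bit_xor)
  then show ?thesis by (metis take_bit_nat_less_exp)
qed

lemma XZ_mult: assumes "x' < 2^n"
  shows "XZ n x z * XZ n x' z' = (-1)^pc n x' z \<cdot>\<^sub>m XZ n (xor x x') (xor z z')"
proof (rule eq_matI)
  fix r c assume r: "r < dim_row (((-1)^pc n x' z) \<cdot>\<^sub>m XZ n (xor x x') (xor z z'))"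
    and c: "c < dim_col (((-1)^pc n x' z) \<cdot>\<^sub>m XZ n (xor x x') (xor z z'))"
  then have r: "r < 2^n" and c: "c < 2^n" by auto
  have cx: "xor c x' < 2^n" using xor_lt[OF c assms] .
  have "(XZ n x z * XZ n x' z') $$ (r,c) = (\<Sum>m<2^n. XZ n x z $$ (r,m) * XZ n x' z' $$ (m,c))"
    using r c by (simp add: scalar_prod_def atLeast0LessThan)
  also have "\<dots> = (\<Sum>m<2^n. if m = xor c x' then XZ n x z $$ (r,m) * (-1)^pc n c z' else 0)"
    by (rule sum.cong) (auto simp: XZ_index c)
  also have "\<dots> = XZ n x z $$ (r, xor c x') * (-1)^pc n c z'"
    using cx by simp
  also have "\<dots> = (if r = xor (xor c x') x then (-1)^pc n (xor c x') z * (-1)^pc n c z' else 0)"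
    using r cx by (simp add: XZ_index)
  also have "\<dots> = ((-1)^pc n x' z \<cdot>\<^sub>m XZ n (xor x x') (xor z z')) $$ (r,c)"
    using r c by (auto simp: XZ_index sgn_pc_xor sgn_pc_xor2 xor.assoc xor.commute xor.left_commute)
  finally show "(XZ n x z * XZ n x' z') $$ (r,c) = ((-1)^pc n x' z \<cdot>\<^sub>m XZ n (xor x x') (xor z z')) $$ (r,c)" .
qed auto

lemma XZ_00: "XZ n 0 0 = 1\<^sub>m (2^n)"
  by (rule eq_matI) (auto simp: XZ_index)

lemma pauli_XZ: "pauli n x z = (\<i> ^ pc n x z) \<cdot>\<^sub>m XZ n x z"
  unfolding pauli_def pc_def by simp



lemma adj_dims[simp]: "dim_row (mat_adjoint A) = dim_col A" "dim_col (mat_adjoint A) = dim_row A"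
  unfolding mat_adjoint_def by auto

lemma adj_carrier: "A \<in> carrier_mat n m \<Longrightarrow> mat_adjoint A \<in> carrier_mat m n"
  by auto

lemma adj_index[simp]: "i < dim_col A \<Longrightarrow> j < dim_row A \<Longrightarrow> mat_adjoint A $$ (i,j) = cnj (A $$ (j,i))"
  unfolding mat_adjoint_def by (simp add: mat_of_rows_index)

lemma adj_mult: fixes A B :: "complex mat" assumes "A \<in> carrier_mat n m" "B \<in> carrier_mat m k"
  shows "mat_adjoint (A * B) = mat_adjoint B * mat_adjoint A"
proof (rule eq_matI)
  fix i j assume i: "i < dim_row (mat_adjoint B * mat_adjoint A)" and j: "j < dim_col (mat_adjoint B * mat_adjoint A)"
  then have i: "i < k" and j: "j < n" using assms by auto
  have "mat_adjoint (A * B) $$ (i,j) = cnj ((A * B) $$ (j,i))" using i j assms by simp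
  also have "\<dots> = cnj (\<Sum>l=0..<m. A $$ (j,l) * B $$ (l,i))" using i j assms by (simp add: scalar_prod_def)
  also have "\<dots> = (\<Sum>l=0..<m. cnj (B $$ (l,i)) * cnj (A $$ (j,l)))" by (simp add: mult.commute)
  also have "\<dots> = (mat_adjoint B * mat_adjoint A) $$ (i,j)" using i j assms by (simp add: scalar_prod_def)
  finally show "mat_adjoint (A * B) $$ (i,j) = (mat_adjoint B * mat_adjoint A) $$ (i,j)" .
qed (use assms in auto)

lemma adj_one[simp]: "mat_adjoint (1\<^sub>m n) = (1\<^sub>m n :: complex mat)"
  by (rule eq_matI) auto

lemma smult_one_mat': "(1::'a::ring_1) \<cdot>\<^sub>m A = A"
  by (rule eq_matI) auto

lemma trace_comm: assumes "A \<in> carrier_mat n m" "B \<in> carrier_mat m n"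
  shows "trace (A * B) = trace (B * A)"
proof -
  have "trace (A * B) = (\<Sum>i<n. \<Sum>j<m. A $$ (i,j) * B $$ (j,i))"
    using assms unfolding trace_def by (simp add: scalar_prod_def atLeast0LessThan)
  also have "\<dots> = (\<Sum>j<m. \<Sum>i<n. B $$ (j,i) * A $$ (i,j))"
    by (subst sum.swap) (simp add: mult.commute)
  also have "\<dots> = trace (B * A)"
    using assms unfolding trace_def by (simp add: scalar_prod_def atLeast0LessThan)
  finally show ?thesis .
qed

lemma trace_smult: "A \<in> carrier_mat k k \<Longrightarrow> trace (c \<cdot>\<^sub>m A) = c * trace A"
  unfolding trace_def by (simp add: sum_distrib_left)

lemma trace_one: "trace (1\<^sub>m n) = of_nat n"
  unfolding trace_def by simp

lemma trace_minus: assumes "A \<in> carrier_mat n n" "B \<in> carrier_mat n n"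
  shows "trace (A - B) = trace A - trace B"
  using assms unfolding trace_def by (simp add: sum_subtractf)

lemma traceless_carrier: "Ob \<in> carrier_mat (2^n) (2^n) \<Longrightarrow> traceless n Ob \<in> carrier_mat (2^n) (2^n)"
  unfolding traceless_def by auto

lemma trace_traceless: "Ob \<in> carrier_mat (2^n) (2^n) \<Longrightarrow> trace (traceless n Ob) = 0"
  unfolding traceless_def
  by (subst trace_minus[of _ "2^n"]) (auto simp: trace_smult[of "1\<^sub>m (2^n)" "2^n"] trace_one)

lemma smult_smult_m: "(a::'a::comm_ring) \<cdot>\<^sub>m (b \<cdot>\<^sub>m A) = (a * b) \<cdot>\<^sub>m A"
  by (rule eq_matI) (auto simp: mult.assoc)

lemma conj_mult:
  assumes W: "W \<in> carrier_mat N N" and A: "A \<in> carrier_mat N N" and B: "B \<in> carrier_mat N N"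
    and u: "W * mat_adjoint W = 1\<^sub>m N"
  shows "mat_adjoint W * (A * B) * W = (mat_adjoint W * A * W) * (mat_adjoint W * B * W)"
proof -
  have Wa: "mat_adjoint W \<in> carrier_mat N N" using W by auto
  have "(mat_adjoint W * A * W) * (mat_adjoint W * B * W) = mat_adjoint W * A * (W * mat_adjoint W) * B * W"
    using W Wa A B by (simp add: assoc_mult_mat[of _ N N _ N _ N])
  also have "\<dots> = mat_adjoint W * (A * B) * W"
    using W Wa A B u by (simp add: assoc_mult_mat[of _ N N _ N _ N])
  finally show ?thesis by simp
qed

fun Fm :: "(nat \<Rightarrow> nat) \<Rightarrow> nat \<Rightarrow> nat \<Rightarrow> nat" where
  "Fm a 0 z = 0"
| "Fm a (Suc m) z = (if bit z m then xor (Fm a m z) (a m) else Fm a m z)"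

lemma take_bit_add_pow: "take_bit (Suc m) (z::nat) = (if bit z m then xor (take_bit m z) (2^m) else take_bit m z)"
proof -
  have "and (take_bit m z) (2^m) = 0"
    by (rule bit_eqI) (auto simp: bit_and_iff bit_take_bit_iff bit_exp_iff)
  then have "take_bit m z + 2^m = xor (take_bit m z) (2^m)"
    by (rule disjunctive_add_eq_xor)
  then show ?thesis by (simp add: take_bit_Suc_from_most)
qed

lemma conj_XZ:
  assumes W: "W \<in> carrier_mat (2^n) (2^n)"
    and u1: "W * mat_adjoint W = 1\<^sub>m (2^n)" and u2: "mat_adjoint W * W = 1\<^sub>m (2^n)"
    and h: "\<And>i. i < n \<Longrightarrow> \<exists>c. cmod c = 1 \<and>
               mat_adjoint W * XZ n 0 (2^i) * W = c \<cdot>\<^sub>m XZ n (2^i) (a i)"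
  shows "m \<le> n \<Longrightarrow> \<exists>d. cmod d = 1 \<and>
     mat_adjoint W * XZ n 0 (take_bit m z) * W = d \<cdot>\<^sub>m XZ n (take_bit m z) (Fm a m z)"
proof (induction m)
  case 0
  have "mat_adjoint W * XZ n 0 0 * W = XZ n 0 0"
    using W u2 by (simp add: XZ_00)
  then show ?case by (intro exI[of _ 1]) (simp add: smult_one_mat')
next
  case (Suc m)
  then obtain d where d: "cmod d = 1"
    and e: "mat_adjoint W * XZ n 0 (take_bit m z) * W = d \<cdot>\<^sub>m XZ n (take_bit m z) (Fm a m z)"
    by auto
  show ?case
  proof (cases "bit z m")
    case False
    then show ?thesis using d e by (auto simp: take_bit_add_pow)
  next
    case True
    obtain c where c: "cmod c = 1"
      and ec: "mat_adjoint W * XZ n 0 (2^m) * W = c \<cdot>\<^sub>m XZ n (2^m) (a m)"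
      using h[of m] Suc.prems by auto
    have m2: "(2::nat)^m < 2^n" using Suc.prems by simp
    have tb: "take_bit m z < 2^n"
      by (metis Suc.prems Suc_leD order_less_le_trans take_bit_nat_less_exp power_increasing_iff
          one_less_numeral_iff semiring_norm(76))
    have "XZ n 0 (take_bit (Suc m) z) = XZ n 0 (take_bit m z) * XZ n 0 (2^m)"
      using True m2 by (simp add: take_bit_add_pow XZ_mult smult_one_mat')
    then have "mat_adjoint W * XZ n 0 (take_bit (Suc m) z) * W
      = (d \<cdot>\<^sub>m XZ n (take_bit m z) (Fm a m z)) * (c \<cdot>\<^sub>m XZ n (2^m) (a m))"
      using conj_mult[OF W _ _ u1] e ec by simp
    also have "\<dots> = (c * d) \<cdot>\<^sub>m (XZ n (take_bit m z) (Fm a m z) * XZ n (2^m) (a m))"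
      by (simp add: mult_smult_assoc_mat[of _ "2^n" "2^n" _ "2^n"] mult_smult_distrib[of _ "2^n" "2^n" _ "2^n"] smult_smult_m)
    also have "\<dots> = (c * d * (-1)^pc n (2^m) (Fm a m z)) \<cdot>\<^sub>m XZ n (take_bit (Suc m) z) (Fm a (Suc m) z)"
      using True m2 by (simp add: XZ_mult take_bit_add_pow smult_smult_m)
    finally show ?thesis using c d
      by (intro exI[of _ "c * d * (-1)^pc n (2^m) (Fm a m z)"]) (simp add: norm_mult norm_power)
  qed
qed



lemma pauli_carrier[simp]: "pauli n x z \<in> carrier_mat (2^n) (2^n)"
  unfolding pauli_XZ by simp

lemma Zq_XZ: "Zq n j = XZ n 0 (2^j)"
  unfolding Zq_def pauli_XZ by (simp add: smult_one_mat')

lemma Xq_XZ: "Xq n j = XZ n (2^j) 0"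
  unfolding Xq_def pauli_XZ by (simp add: smult_one_mat')

lemma foldr_Z: "(\<forall>j\<in>set js. g j \<le> 1) \<Longrightarrow>
  foldr (\<lambda>j M. (Zq n j ^\<^sub>m g j) * M) js (1\<^sub>m (2^n))
  = XZ n 0 (foldr (\<lambda>j acc. if g j = 1 then xor (2^j) acc else acc) js 0)"
proof (induction js)
  case Nil
  then show ?case by (simp add: XZ_00)
next
  case (Cons j js)
  then have IH: "foldr (\<lambda>j M. (Zq n j ^\<^sub>m g j) * M) js (1\<^sub>m (2^n))
     = XZ n 0 (foldr (\<lambda>j acc. if g j = 1 then xor (2^j) acc else acc) js 0)" by simp
  have "g j = 0 \<or> g j = 1" using Cons.prems by auto
  then show ?case
  proof
    assume "g j = 0"
    then show ?thesis using IH by (simp add: Zq_XZ)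
  next
    assume g1: "g j = 1"
    have "Zq n j ^\<^sub>m 1 = Zq n j" by (simp add: Zq_XZ)
    then show ?thesis using IH g1 by (simp add: Zq_XZ XZ_mult smult_one_mat')
  qed
qed

definition Amask :: "gf2 poly \<Rightarrow> nat \<Rightarrow> nat \<Rightarrow> nat" where
  "Amask P v i = foldr (\<lambda>j acc. if gf2_to_nat (alpha P v i j) = 1 then xor (2^j) acc else acc) [0..<degree P] 0"

lemma gen_eq: "gen P v i = (\<i> ^ gf2_to_nat (alpha P v i i)) \<cdot>\<^sub>m XZ (degree P) (2^i) (Amask P v i)"
proof -
  have "foldr (\<lambda>j M. (Zq (degree P) j ^\<^sub>m gf2_to_nat (alpha P v i j)) * M) [0..<degree P] (1\<^sub>m (2^degree P))
     = XZ (degree P) 0 (Amask P v i)"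
    unfolding Amask_def by (rule foldr_Z) (auto simp: gf2_to_nat_def)
  then show ?thesis unfolding gen_def Let_def
    by (simp add: Xq_XZ XZ_mult smult_one_mat')
qed

lemma bit_ge: "(a::nat) < 2^n \<Longrightarrow> n \<le> k \<Longrightarrow> \<not> bit a k"
  by (metis bit_take_bit_iff leD take_bit_nat_eq_self_iff)

lemma char_sum: "(\<Sum>z<2^n. (-1::complex)^pc n d z) = (if (\<forall>k<n. \<not> bit d k) then 2^n else 0)"
proof (cases "\<forall>k<n. \<not> bit d k")
  case True
  then have "\<And>z. pc n d z = 0" unfolding pc_def by auto
  then show ?thesis using True by simp
next
  case False
  then obtain j where j: "j < n" "bit d j" by auto
  define S where "S = (\<Sum>z<2^n. (-1::complex)^pc n d z)"
  have pj: "pc n d (2^j) = 1"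
  proof -
    have "{k. k < n \<and> bit d k \<and> bit ((2::nat)^j) k} = {j}" using j by (auto simp: bit_exp_iff)
    then show ?thesis unfolding pc_def by simp
  qed
  have jl: "(2::nat)^j < 2^n" using j by simp
  have "(\<Sum>z<2^n. - ((-1::complex)^pc n d z)) = (\<Sum>z<2^n. (-1::complex)^pc n d z)"
    by (rule sum.reindex_bij_witness[of _ "\<lambda>z. xor z (2^j)" "\<lambda>z. xor z (2^j)"])
      (use jl in \<open>auto simp: xor.assoc xor_lt sgn_pc_xor2 pj\<close>)
  then have "- S = S" unfolding S_def by (simp add: sum_negf)
  then have "S = 0" by simp
  then show ?thesis using False S_def by simp
qed

lemma xor_bits_eq: "(b::nat) < 2^n \<Longrightarrow> c < 2^n \<Longrightarrow> (\<forall>k<n. \<not> bit (xor b c) k) \<longleftrightarrow> c = b"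
proof
  assume b: "b < 2^n" and c: "c < 2^n" and h: "\<forall>k<n. \<not> bit (xor b c) k"
  show "c = b"
  proof (rule bit_eqI)
    fix k show "bit c k = bit b k"
    proof (cases "k < n")
      case True then show ?thesis using h by (auto simp: bit_xor_iff)
    next
      case False then show ?thesis using b c bit_ge by (metis not_less)
    qed
  qed
qed auto

lemma trace_XZ0: assumes M: "M \<in> carrier_mat (2^n) (2^n)"
  shows "trace (XZ n 0 z * M) = (\<Sum>c<2^n. (-1)^pc n c z * M $$ (c,c))"
  unfolding trace_def
proof (rule sum.cong)
  fix i :: nat assume i: "i \<in> {..<2^n}"
  have "(XZ n 0 z * M) $$ (i,i) = (\<Sum>m<2^n. XZ n 0 z $$ (i,m) * M $$ (m,i))"
    using M i by (simp add: scalar_prod_def atLeast0LessThan)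
  also have "\<dots> = (\<Sum>m<2^n. if m = i then (-1)^pc n i z * M $$ (i,i) else 0)"
    by (rule sum.cong) (use i in \<open>auto simp: XZ_index\<close>)
  also have "\<dots> = (-1)^pc n i z * M $$ (i,i)" using i by simp
  finally show "(XZ n 0 z * M) $$ (i,i) = (-1)^pc n i z * M $$ (i,i)" .
qed (use M in simp)

lemma diag_fourier: assumes M: "M \<in> carrier_mat (2^n) (2^n)" and b: "b < 2^n"
  shows "M $$ (b,b) = (\<Sum>z<2^n. (-1)^pc n b z * trace (XZ n 0 z * M)) / 2^n"
proof -
  have "(\<Sum>z<2^n. (-1)^pc n b z * trace (XZ n 0 z * M))
      = (\<Sum>z<(2::nat)^n. \<Sum>c<(2::nat)^n. (-1)^pc n (xor b c) z * M $$ (c,c))"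
    by (simp add: trace_XZ0[OF M] sum_distrib_left sgn_pc_xor mult.assoc)
  also have "\<dots> = (\<Sum>c<(2::nat)^n. M $$ (c,c) * (\<Sum>z<(2::nat)^n. (-1)^pc n (xor b c) z))"
    by (subst sum.swap) (simp add: sum_distrib_left mult.commute)
  also have "\<dots> = (\<Sum>c<(2::nat)^n. if c = b then M $$ (b,b) * 2^n else 0)"
    by (rule sum.cong) (use b in \<open>auto simp: char_sum xor_bits_eq\<close>)
  also have "\<dots> = M $$ (b,b) * 2^n" using b by simp
  finally show ?thesis by simp
qed



lemma proj_carrier[simp]: "proj n b \<in> carrier_mat (2^n) (2^n)"
  unfolding proj_def by auto

lemma proj_dims[simp]: "dim_row (proj n b) = 2^n" "dim_col (proj n b) = 2^n"
  unfolding proj_def by auto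

lemma trace_proj: assumes M: "M \<in> carrier_mat (2^n) (2^n)" and b: "b < 2^n"
  shows "trace (proj n b * M) = M $$ (b,b)"
proof -
  have "trace (proj n b * M) = (\<Sum>i<2^n. if i = b then M $$ (b,b) else 0)"
    unfolding trace_def
  proof (rule sum.cong)
    fix i :: nat assume i: "i \<in> {..<2^n}"
    have "(proj n b * M) $$ (i,i) = (\<Sum>m<2^n. proj n b $$ (i,m) * M $$ (m,i))"
      using M i by (simp add: scalar_prod_def atLeast0LessThan)
    also have "\<dots> = (\<Sum>m<2^n. if m = b \<and> i = b then M $$ (b,b) else 0)"
      by (rule sum.cong) (use i in \<open>auto simp: proj_def\<close>)
    also have "\<dots> = (if i = b then M $$ (b,b) else 0)" using b by (cases "i = b") auto
    finally show "(proj n b * M) $$ (i,i) = (if i = b then M $$ (b,b) else 0)" .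
  qed (use M in simp)
  also have "\<dots> = M $$ (b,b)" using b by simp
  finally show ?thesis .
qed

lemma W_bound:
  assumes W: "W \<in> carrier_mat (2^n) (2^n)"
    and u1: "W * mat_adjoint W = 1\<^sub>m (2^n)" and u2: "mat_adjoint W * W = 1\<^sub>m (2^n)"
    and O: "O0 \<in> carrier_mat (2^n) (2^n)" and t0: "trace O0 = 0"
    and h: "\<And>z. z < 2^n \<Longrightarrow> \<exists>d. cmod d = 1 \<and>
               mat_adjoint W * XZ n 0 z * W = d \<cdot>\<^sub>m pauli n (gx z) (gz z)"
    and b: "b < 2^n"
  shows "cmod (trace (Phi n W b * O0)) \<le>
     (\<Sum>z\<in>{1..<2^n}. cmod (trace (pauli n (gx z) (gz z) * O0))) / 2^n"
proof -
  have as[simp]: "\<And>A B C. A \<in> carrier_mat (2^n) (2^n) \<Longrightarrow> B \<in> carrier_mat (2^n) (2^n) \<Longrightarrow>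
     C \<in> carrier_mat (2^n) (2^n) \<Longrightarrow> A * B * C = A * (B * C)"
    by (rule assoc_mult_mat) auto
  have ms[simp]: "\<And>A B. A \<in> carrier_mat (2^n) (2^n) \<Longrightarrow> B \<in> carrier_mat (2^n) (2^n) \<Longrightarrow>
     A * B \<in> carrier_mat (2^n) (2^n)" by auto
  define M where "M = W * O0 * mat_adjoint W"
  have Wa: "mat_adjoint W \<in> carrier_mat (2^n) (2^n)" using W by auto
  have Mc: "M \<in> carrier_mat (2^n) (2^n)" unfolding M_def using W O Wa by auto
  have "trace (Phi n W b * O0) = trace (mat_adjoint W * (proj n b * W * O0))"
    unfolding Phi_def using W O Wa by simp
  also have "\<dots> = trace ((proj n b * W * O0) * mat_adjoint W)"
    by (rule trace_comm[of _ "2^n" "2^n"]) (use W O Wa in auto)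
  also have "\<dots> = trace (proj n b * M)"
    unfolding M_def using W O Wa by simp
  also have "\<dots> = M $$ (b,b)" by (rule trace_proj[OF Mc b])
  finally have e1: "trace (Phi n W b * O0) = M $$ (b,b)" .
  have tz: "trace (XZ n 0 z * M) = trace ((mat_adjoint W * XZ n 0 z * W) * O0)" for z
  proof -
    have "trace (XZ n 0 z * M) = trace ((XZ n 0 z * W * O0) * mat_adjoint W)"
      unfolding M_def using W O Wa by simp
    also have "\<dots> = trace (mat_adjoint W * (XZ n 0 z * W * O0))"
      by (rule trace_comm[of _ "2^n" "2^n"]) (use W O Wa in auto)
    also have "\<dots> = trace ((mat_adjoint W * XZ n 0 z * W) * O0)"
      using W O Wa by simp
    finally show ?thesis .
  qed
  have g: "cmod (trace (XZ n 0 z * M)) = cmod (trace (pauli n (gx z) (gz z) * O0))" if z: "z < 2^n" for z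
  proof -
    obtain d where d: "cmod d = 1" and e: "mat_adjoint W * XZ n 0 z * W = d \<cdot>\<^sub>m pauli n (gx z) (gz z)"
      using h[OF z] by auto
    have "trace (XZ n 0 z * M) = trace (d \<cdot>\<^sub>m (pauli n (gx z) (gz z) * O0))"
      using tz e O by (simp add: mult_smult_assoc_mat[of _ "2^n" "2^n" _ "2^n"])
    also have "\<dots> = d * trace (pauli n (gx z) (gz z) * O0)"
      by (rule trace_smult[of _ "2^n"]) (use O in auto)
    finally show ?thesis using d by (simp add: norm_mult)
  qed
  have g0: "trace (XZ n 0 0 * M) = 0"
    using tz[of 0] W u2 O t0 by (simp add: XZ_00)
  have "cmod (M $$ (b,b)) = cmod (\<Sum>z<2^n. (-1)^pc n b z * trace (XZ n 0 z * M)) / 2^n"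
    using diag_fourier[OF Mc b] by (simp add: norm_divide norm_power)
  also have "cmod (\<Sum>z<2^n. (-1)^pc n b z * trace (XZ n 0 z * M)) \<le> (\<Sum>z<(2::nat)^n. cmod (trace (XZ n 0 z * M)))"
    by (rule order_trans[OF norm_sum]) (simp add: norm_mult norm_power)
  also have "(\<Sum>z<(2::nat)^n. cmod (trace (XZ n 0 z * M))) = (\<Sum>z\<in>{1..<2^n}. cmod (trace (XZ n 0 z * M)))"
  proof -
    have "{..<(2::nat)^n} = insert 0 {1..<2^n}" by auto
    then show ?thesis using g0 by simp
  qed
  also have "\<dots> = (\<Sum>z\<in>{1..<2^n}. cmod (trace (pauli n (gx z) (gz z) * O0)))"
    by (rule sum.cong) (auto simp: g)
  finally show ?thesis using e1 by (simp add: divide_right_mono)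
qed



definition bv :: "nat \<Rightarrow> nat \<Rightarrow> gf2" where
  "bv w k = (if bit w k then 1 else 0)"

lemma gf2_two: "(2::gf2) = 0"
  using gf2_one_one by (metis one_add_one)

lemma bv_xor: "bv (xor a b) k = bv a k + bv b k"
  unfolding bv_def by (auto simp: bit_xor_iff gf2_two)

lemma bv_Fm: "bv (Fm a m z) k = (\<Sum>i<m. bv z i * bv (a i) k)"
proof (induction m)
  case 0 then show ?case by (simp add: bv_def)
next
  case (Suc m) then show ?case by (cases "bit z m") (simp_all add: bv_xor bv_def[of z m])
qed

lemma bit_foldr_xor: "distinct js \<Longrightarrow>
  bit (foldr (\<lambda>j acc. if g j then xor (2^j) acc else (acc::nat)) js 0) k \<longleftrightarrow> k \<in> set js \<and> g k"
  by (induction js) (auto simp: bit_xor_iff bit_exp_iff)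

lemma gf2_to_nat_one: "gf2_to_nat x = 1 \<longleftrightarrow> x = 1"
  unfolding gf2_to_nat_def by auto

lemma bv_Amask: "j < degree P \<Longrightarrow> bv (Amask P v i) j = alpha P v i j"
proof -
  assume j: "j < degree P"
  have "bit (Amask P v i) j \<longleftrightarrow> alpha P v i j = 1"
    unfolding Amask_def gf2_to_nat_one using bit_foldr_xor[of "[0..<degree P]" "\<lambda>j. alpha P v i j = 1" j] j
    by simp
  then show ?thesis unfolding bv_def using gf2_cases[of "alpha P v i j"] by auto
qed

lemma coeff_poly_of_nat: "coeff (poly_of_nat n a) k = (if k < n \<and> bit a k then 1 else 0)"
  unfolding poly_of_nat_def by (simp add: coeff_sum coeff_monom)

lemma poly_of_nat_bv: "poly_of_nat n a = (\<Sum>i<n. monom (bv a i) i)"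
  unfolding poly_of_nat_def bv_def by simp

lemma poly_mod_sum: "(\<Sum>i\<in>A. f i) mod (P::'a::field poly) = (\<Sum>i\<in>A. f i mod P)"
  by (induction A rule: infinite_finite_induct) (simp_all add: poly_mod_add_left)

definition Lam :: "gf2 poly \<Rightarrow> gf2 poly \<Rightarrow> gf2" where
  "Lam P f = coeff (f mod P) 0"

lemma Lam_sum: "Lam P (\<Sum>i\<in>A. f i) = (\<Sum>i\<in>A. Lam P (f i))"
  unfolding Lam_def by (simp add: poly_mod_sum coeff_sum)

lemma Lam_smult: "Lam P (smult c f) = c * Lam P f"
  unfolding Lam_def by (simp add: mod_smult_left)

lemma poly_sum_monoms: "degree r < n \<Longrightarrow> r = (\<Sum>p<n. monom (coeff r p) p)"
  by (rule poly_eqI) (auto simp: coeff_sum coeff_monom coeff_eq_0)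

lemma M0_Lam: "M0 P p j = Lam P (monom 1 (p + j))"
  unfolding M0_def Gamma_def Lam_def by simp

lemma Lam_rx: assumes "degree r < n"
  shows "(\<Sum>p<n. coeff r p * M0 P p j) = Lam P (r * monom 1 j)"
proof -
  have "r * monom 1 j = (\<Sum>p<n. smult (coeff r p) (monom 1 (p + j)))"
    by (subst poly_sum_monoms[OF assms]) (simp add: sum_distrib_right mult_monom smult_monom)
  then show ?thesis by (simp add: Lam_sum Lam_smult M0_Lam)
qed

lemma alpha_sum: assumes "j < degree P"
  shows "bv (Fm (Amask P v) (degree P) z) j
    = (\<Sum>p<degree P. coeff (poly_of_nat (degree P) v * poly_of_nat (degree P) z mod P) p * M0 P p j)"
proof -
  let ?n = "degree P"
  let ?pv = "poly_of_nat ?n v"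
  have "bv (Fm (Amask P v) ?n z) j = (\<Sum>i<?n. bv z i * alpha P v i j)"
    by (simp add: bv_Fm bv_Amask assms)
  also have "\<dots> = (\<Sum>i<?n. \<Sum>p<?n. bv z i * (coeff (?pv * monom 1 i mod P) p * M0 P p j))"
    unfolding alpha_def by (simp add: sum_distrib_left)
  also have "\<dots> = (\<Sum>p<?n. \<Sum>i<?n. coeff (smult (bv z i) (?pv * monom 1 i mod P)) p * M0 P p j)"
    by (subst sum.swap) (simp add: mult.assoc)
  also have "\<dots> = (\<Sum>p<?n. coeff (\<Sum>i<?n. smult (bv z i) (?pv * monom 1 i) mod P) p * M0 P p j)"
    by (simp add: coeff_sum sum_distrib_right mod_smult_left)
  also have "(\<Sum>i<?n. smult (bv z i) (?pv * monom 1 i) mod P) = (\<Sum>i<?n. smult (bv z i) (?pv * monom 1 i)) mod P"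
    by (simp add: poly_mod_sum)
  also have "(\<Sum>i<?n. smult (bv z i) (?pv * monom 1 i)) = (\<Sum>i<?n. ?pv * monom (bv z i) i)"
    by (rule sum.cong) (simp_all add: mult_smult_right[symmetric] smult_monom)
  also have "\<dots> = ?pv * poly_of_nat ?n z"
    by (simp add: poly_of_nat_bv[of _ z] sum_distrib_left)
  finally show ?thesis .
qed



lemma deg_P: assumes "irreducible (P::gf2 poly)" shows "degree P \<ge> 1"
proof (rule ccontr)
  assume "\<not> degree P \<ge> 1"
  then have d: "degree P = 0" by simp
  have "P \<noteq> 0" using assms by auto
  then have "is_unit P" using d is_unit_iff_degree by blast
  then show False using assms by (auto simp: irreducible_def)
qed

lemma Lam_one: "degree (P::gf2 poly) \<ge> 1 \<Longrightarrow> Lam P 1 = 1"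
  unfolding Lam_def by (subst mod_poly_less) auto

lemma degree_poly_of_nat: "n \<ge> 1 \<Longrightarrow> degree (poly_of_nat n a) < n"
  by (rule degree_lessI) (auto simp: coeff_poly_of_nat)

lemma poly_of_nat_inj: assumes "a < 2^n" "b < 2^n" "poly_of_nat n a = poly_of_nat n b"
  shows "a = b"
proof (rule bit_eqI)
  fix k show "bit a k = bit b k"
  proof (cases "k < n")
    case True
    have "coeff (poly_of_nat n a) k = coeff (poly_of_nat n b) k" using assms by simp
    then show ?thesis using True by (auto simp: coeff_poly_of_nat split: if_splits)
  next
    case False then show ?thesis using assms bit_ge by (metis not_less)
  qed
qed

lemma poly_of_nat_0: "poly_of_nat n 0 = 0"
  unfolding poly_of_nat_def by simp

lemma key_zero:
  assumes irr: "irreducible (P::gf2 poly)" and dr: "degree r < degree P"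
    and h: "\<And>j. j < degree P \<Longrightarrow> Lam P (r * monom 1 j) = 0"
  shows "r = 0"
proof (rule ccontr)
  assume r0: "r \<noteq> 0"
  have P0: "P \<noteq> 0" using irr by auto
  have dP: "degree P \<ge> 1" using deg_P[OF irr] .
  have small: "Lam P (r * q) = 0" if dq: "degree q < degree P" for q
  proof -
    have "r * q = (\<Sum>p<degree P. smult (coeff q p) (r * monom 1 p))"
      by (subst poly_sum_monoms[OF dq]) (simp add: sum_distrib_left mult_smult_right[symmetric] smult_monom)
    then show ?thesis by (simp add: Lam_sum Lam_smult h)
  qed
  have all: "Lam P (r * q) = 0" for q
  proof -
    have "Lam P (r * q) = Lam P (r * (q mod P))"
      unfolding Lam_def by (simp add: mod_mult_right_eq)
    also have "\<dots> = 0"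
    proof (cases "q mod P = 0")
      case True then show ?thesis by (simp add: Lam_def)
    next
      case False then show ?thesis using small degree_mod_less'[OF P0 False] by simp
    qed
    finally show ?thesis .
  qed
  have ndvd: "\<not> P dvd r"
  proof
    assume "P dvd r"
    then have "degree P \<le> degree r" using r0 by (rule dvd_imp_degree_le)
    then show False using dr by simp
  qed
  have "prime_elem P" using irr by (rule field_poly_irreducible_imp_prime)
  then have "coprime P r" using ndvd by (rule prime_elem_imp_coprime)
  then have g1: "gcd r P = 1" by (simp add: coprime_iff_gcd_eq_1 gcd.commute)
  obtain x y where xy: "x * r + y * P = 1"
    using bezout_coefficients_fst_snd[of r P] g1 by metis
  have "r * x = 1 - y * P" using xy by (simp add: algebra_simps)
  then have "Lam P (r * x) = Lam P 1"
    unfolding Lam_def by (simp add: poly_mod_diff_left)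
  then show False using all[of x] Lam_one[OF dP] by simp
qed

lemma f_inj:
  assumes irr: "irreducible P" and n: "degree P = n"
    and v: "v < 2^n" and v': "v' < 2^n" and z: "z < 2^n" and z0: "z \<noteq> 0"
    and eq: "Fm (Amask P v) n z = Fm (Amask P v') n z"
  shows "v = v'"
proof -
  have dP: "n \<ge> 1" using deg_P[OF irr] n by simp
  have P0: "P \<noteq> 0" using irr by auto
  define pv where "pv = poly_of_nat n v"
  define pv' where "pv' = poly_of_nat n v'"
  define pz where "pz = poly_of_nat n z"
  define r where "r = (pv - pv') * pz mod P"
  have dr: "degree r < n"
  proof (cases "r = 0")
    case True then show ?thesis using dP by simp
  next
    case False then show ?thesis unfolding r_def using degree_mod_less'[OF P0] n by (simp add: r_def)
  qed
  have "Lam P (r * monom 1 j) = 0" if j: "j < degree P" for j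
  proof -
    have "bv (Fm (Amask P v) n z) j = bv (Fm (Amask P v') n z) j" using eq by simp
    then have e: "(\<Sum>p<n. coeff (pv * pz mod P) p * M0 P p j) = (\<Sum>p<n. coeff (pv' * pz mod P) p * M0 P p j)"
      using alpha_sum[OF j, of v z] alpha_sum[OF j, of v' z] n unfolding pv_def pv'_def pz_def by simp
    have "(\<Sum>p<n. coeff r p * M0 P p j) = (\<Sum>p<n. coeff (pv * pz mod P) p * M0 P p j) - (\<Sum>p<n. coeff (pv' * pz mod P) p * M0 P p j)"
      unfolding r_def by (simp add: left_diff_distrib poly_mod_diff_left sum_subtractf)
    also have "\<dots> = 0" using e by simp
    finally show ?thesis using Lam_rx[OF dr, of P j] by simp
  qed
  then have "r = 0" using key_zero[OF irr] dr n by blast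
  then have "P dvd (pv - pv') * pz" unfolding r_def by (simp add: mod_eq_0_iff_dvd)
  then have "P dvd (pv - pv') \<or> P dvd pz"
    using field_poly_irreducible_imp_prime[OF irr] prime_elem_dvd_mult_iff by blast
  moreover have "degree (pv - pv') < degree P"
    using degree_diff_le_max[of pv pv'] degree_poly_of_nat[OF dP] n unfolding pv_def pv'_def
    by (metis max_less_iff_conj order_le_less_trans)
  moreover have "degree pz < degree P" using degree_poly_of_nat[OF dP] n unfolding pz_def by simp
  ultimately have "pv - pv' = 0 \<or> pz = 0" using poly_divides_conv0 P0 by blast
  moreover have "pz \<noteq> 0"
  proof
    assume "pz = 0"
    then have "poly_of_nat n z = poly_of_nat n 0" unfolding pz_def by (simp add: poly_of_nat_0)
    then have "z = 0" using poly_of_nat_inj[OF z] by simp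
    then show False using z0 by simp
  qed
  ultimately have "pv = pv'" by simp
  then show ?thesis using poly_of_nat_inj[OF v v'] unfolding pv_def pv'_def by simp
qed



lemma pauli_index: "r < 2^n \<Longrightarrow> c < 2^n \<Longrightarrow>
  pauli n x z $$ (r,c) = \<i>^pc n x z * (if r = xor c x then (-1)^pc n c z else 0)"
  unfolding pauli_XZ by (simp add: XZ_index)

lemma pauli_inj: assumes x: "x < 2^n" and x': "x' < 2^n" and z: "z < 2^n" and z': "z' < 2^n"
  and eq: "pauli n x z = pauli n x' z'"
  shows "x = x' \<and> z = z'"
proof -
  have e0: "pauli n x z $$ (x,0) = pauli n x' z' $$ (x,0)" using eq by simp
  have "\<i>^pc n x z * 1 = \<i>^pc n x' z' * (if x = x' then 1 else 0)"
    using e0 x by (simp add: pauli_index)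
  then have xx: "x = x'" by (cases "x = x'") auto
  then have ph: "\<i>^pc n x z = \<i>^pc n x z'" using e0 x by (simp add: pauli_index)
  have "z = z'"
  proof (rule bit_eqI)
    fix j show "bit z j = bit z' j"
    proof (cases "j < n")
      case True
      have jl: "(2::nat)^j < 2^n" using True by simp
      have xl: "xor (2^j) x < 2^n" using xor_lt[OF jl x] .
      have "pauli n x z $$ (xor (2^j) x, 2^j) = pauli n x' z' $$ (xor (2^j) x, 2^j)" using eq by simp
      then have "\<i>^pc n x z * (-1)^pc n (2^j) z = \<i>^pc n x z * (-1)^pc n (2^j) z'"
        using xl jl xx ph by (simp add: pauli_index)
      then have s: "(-1::complex)^pc n (2^j) z = (-1)^pc n (2^j) z'" by simp
      have pcj: "pc n (2^j) w = (if bit w j then 1 else 0)" for w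
      proof -
        have "{k. k < n \<and> bit ((2::nat)^j) k \<and> bit w k} = (if bit w j then {j} else {})"
          using True by (auto simp: bit_exp_iff)
        then show ?thesis unfolding pc_def by simp
      qed
      show ?thesis using s by (auto simp: pcj split: if_splits)
    next
      case False then show ?thesis using z z' bit_ge by (metis not_less)
    qed
  qed
  then show ?thesis using xx by simp
qed

lemma Paulis_sum: "(\<Sum>Q\<in>Paulis n. f Q) = (\<Sum>p\<in>{..<2^n} \<times> {..<2^n}. f (pauli n (fst p) (snd p)))"
proof -
  have "Paulis n = (\<lambda>p. pauli n (fst p) (snd p)) ` ({..<2^n} \<times> {..<2^n})"
    unfolding Paulis_def by force
  moreover have "inj_on (\<lambda>p. pauli n (fst p) (snd p)) ({..<2^n} \<times> {..<2^n})"
    by (rule inj_onI) (use pauli_inj in \<open>auto simp: prod_eq_iff\<close>)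
  ultimately show ?thesis by (simp add: sum.reindex)
qed

lemma Fm_lt: "(\<And>i. a i < 2^n) \<Longrightarrow> Fm a m z < 2^n"
  by (induction m) (auto simp: xor_lt)

lemma foldr_lt: "(\<forall>j\<in>set js. j < n) \<Longrightarrow> foldr (\<lambda>j acc. if g j then xor (2^j) acc else (acc::nat)) js 0 < 2^n"
  by (induction js) (auto intro!: xor_lt)

lemma Amask_lt: "Amask P v i < 2^degree P"
  unfolding Amask_def by (rule foldr_lt) auto

lemma uminus_smult_m: "- (c \<cdot>\<^sub>m (A::complex mat)) = (- c) \<cdot>\<^sub>m A"
  by (rule eq_matI) auto

lemma cmod_i_pow: "cmod (\<i> ^ k) = 1"
  by (simp add: norm_power)



lemma unitaryD: "unitary_mat n W \<Longrightarrow> W \<in> carrier_mat (2^n) (2^n) \<and>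
   W * mat_adjoint W = 1\<^sub>m (2^n) \<and> mat_adjoint W * W = 1\<^sub>m (2^n)"
  unfolding unitary_mat_def by auto

lemma conj_Some:
  assumes n: "degree P = n" and W: "unitary_mat n W"
    and h: "\<forall>i < n. mat_adjoint W * Zq n i * W = gen P v i \<or> mat_adjoint W * Zq n i * W = - gen P v i"
    and z: "z < 2^n"
  shows "\<exists>d. cmod d = 1 \<and> mat_adjoint W * XZ n 0 z * W = d \<cdot>\<^sub>m pauli n z (Fm (Amask P v) n z)"
proof -
  have Wc: "W \<in> carrier_mat (2^n) (2^n)" and u1: "W * mat_adjoint W = 1\<^sub>m (2^n)"
    and u2: "mat_adjoint W * W = 1\<^sub>m (2^n)" using unitaryD[OF W] by auto
  have hh: "\<exists>c. cmod c = 1 \<and> mat_adjoint W * XZ n 0 (2^i) * W = c \<cdot>\<^sub>m XZ n (2^i) (Amask P v i)"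
    if i: "i < n" for i
  proof -
    have g: "gen P v i = (\<i> ^ gf2_to_nat (alpha P v i i)) \<cdot>\<^sub>m XZ n (2^i) (Amask P v i)"
      using gen_eq[of P v i] n by simp
    from h i have "mat_adjoint W * XZ n 0 (2^i) * W = gen P v i \<or> mat_adjoint W * XZ n 0 (2^i) * W = - gen P v i"
      by (simp add: Zq_XZ)
    then show ?thesis
    proof
      assume "mat_adjoint W * XZ n 0 (2^i) * W = gen P v i"
      then show ?thesis using g by (intro exI[of _ "\<i> ^ gf2_to_nat (alpha P v i i)"]) (simp add: cmod_i_pow)
    next
      assume "mat_adjoint W * XZ n 0 (2^i) * W = - gen P v i"
      then show ?thesis using g
        by (intro exI[of _ "- (\<i> ^ gf2_to_nat (alpha P v i i))"]) (simp add: cmod_i_pow uminus_smult_m)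
    qed
  qed
  obtain d where d: "cmod d = 1" and e: "mat_adjoint W * XZ n 0 (take_bit n z) * W
      = d \<cdot>\<^sub>m XZ n (take_bit n z) (Fm (Amask P v) n z)"
    using conj_XZ[OF Wc u1 u2 hh, of n z] by auto
  have tz: "take_bit n z = z" using z by (simp add: take_bit_nat_eq_self_iff)
  let ?k = "pc n z (Fm (Amask P v) n z)"
  have "d \<cdot>\<^sub>m XZ n z (Fm (Amask P v) n z) = (d * (-\<i>)^?k) \<cdot>\<^sub>m pauli n z (Fm (Amask P v) n z)"
  proof -
    have one: "(-\<i>)^?k * \<i>^?k = 1" by (simp add: power_mult_distrib[symmetric])
    have dd: "(d * (-\<i>)^?k) * \<i>^?k = d" by (simp add: mult.assoc one)
    show ?thesis by (simp only: pauli_XZ smult_smult_m dd)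
  qed
  then show ?thesis using e tz d
    by (intro exI[of _ "d * (-\<i>)^?k"]) (simp add: norm_mult norm_power)
qed

lemma conj_None: "\<exists>d. cmod d = 1 \<and> mat_adjoint (1\<^sub>m (2^n)) * XZ n 0 z * 1\<^sub>m (2^n) = d \<cdot>\<^sub>m pauli n 0 z"
  by (intro exI[of _ 1]) (simp add: pauli_XZ smult_one_mat')

definition GG :: "gf2 poly \<Rightarrow> nat \<Rightarrow> nat option \<Rightarrow> nat \<Rightarrow> nat \<times> nat" where
  "GG P n k z = (case k of None \<Rightarrow> (0, z) | Some v \<Rightarrow> (z, Fm (Amask P v) n z))"

lemma Bval_nonneg: "Bval n Ob W \<ge> 0"
proof -
  have "cmod (trace (Phi n W 0 * traceless n Ob)) \<le> Bval n Ob W"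
    unfolding Bval_def by (rule Max_ge) auto
  then show ?thesis by (meson norm_ge_zero order_trans)
qed

lemma Bval_ge: "b < 2^n \<Longrightarrow> cmod (trace (Phi n W b * traceless n Ob)) \<le> Bval n Ob W"
  unfolding Bval_def by (rule Max_ge) auto

lemma finite_Idx[simp]: "finite (Idx n)"
  unfolding Idx_def by simp

lemma Bsum_bound:
  assumes irr: "irreducible P" and n: "degree P = n"
    and U: "\<forall>v < 2^n. clifford n (U v) \<and>
           (\<forall>i < n. mat_adjoint (U v) * Zq n i * U v = gen P v i \<or>
                    mat_adjoint (U v) * Zq n i * U v = - gen P v i)"
    and Ob: "Ob \<in> carrier_mat (2^n) (2^n)"
  shows "Bsum n U Ob \<le> stab_norm n (traceless n Ob)"
proof -
  define O0 where "O0 = traceless n Ob"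
  have O0c: "O0 \<in> carrier_mat (2^n) (2^n)" unfolding O0_def using traceless_carrier[OF Ob] .
  have t0: "trace O0 = 0" unfolding O0_def using trace_traceless[OF Ob] .
  define h where "h p = cmod (trace (pauli n (fst p) (snd p) * O0))" for p
  have kb: "Bval n Ob (ens n U k) \<le> (\<Sum>z\<in>{1..<2^n}. h (GG P n k z)) / 2^n" if k: "k \<in> Idx n" for k
  proof -
    have W: "unitary_mat n (ens n U k)"
    proof (cases k)
      case None then show ?thesis by (simp add: ens_def unitary_mat_def)
    next
      case (Some v) then have "v < 2^n" using k by (auto simp: Idx_def)
      then show ?thesis using U Some by (auto simp: ens_def clifford_def)
    qed
    have hyp: "\<exists>d. cmod d = 1 \<and> mat_adjoint (ens n U k) * XZ n 0 z * ens n U k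
        = d \<cdot>\<^sub>m pauli n (fst (GG P n k z)) (snd (GG P n k z))" if z: "z < 2^n" for z
    proof (cases k)
      case None then show ?thesis using conj_None by (simp add: ens_def GG_def)
    next
      case (Some v) then have "v < 2^n" using k by (auto simp: Idx_def)
      then show ?thesis using conj_Some[OF n _ _ z, of "U v" v] U Some by (auto simp: ens_def GG_def clifford_def)
    qed
    show ?thesis unfolding Bval_def
    proof (rule Max.boundedI)
      fix x assume "x \<in> (\<lambda>b. cmod (trace (Phi n (ens n U k) b * traceless n Ob))) ` {..<2^n}"
      then obtain b where b: "b < 2^n" and x: "x = cmod (trace (Phi n (ens n U k) b * O0))"
        unfolding O0_def by auto
      show "x \<le> (\<Sum>z\<in>{1..<2^n}. h (GG P n k z)) / 2^n"
        unfolding x h_def using W_bound[OF _ _ _ O0c t0 hyp b] unitaryD[OF W] by auto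
    next
      have "(0::nat) \<in> {..<2^n}" by simp
      then show "(\<lambda>b. cmod (trace (Phi n (ens n U k) b * traceless n Ob))) ` {..<2^n} \<noteq> {}" by blast
    qed auto
  qed
  have "Bsum n U Ob \<le> (\<Sum>k\<in>Idx n. (\<Sum>z\<in>{1..<2^n}. h (GG P n k z)) / 2^n)"
    unfolding Bsum_def by (rule sum_mono) (rule kb)
  also have "\<dots> = (\<Sum>q\<in>Idx n \<times> {1..<2^n}. h (GG P n (fst q) (snd q))) / 2^n"
    by (simp add: sum_divide_distrib[symmetric] sum.cartesian_product split_def)
  also have "(\<Sum>q\<in>Idx n \<times> {1..<2^n}. h (GG P n (fst q) (snd q)))
      = (\<Sum>p\<in>(\<lambda>q. GG P n (fst q) (snd q)) ` (Idx n \<times> {1..<2^n}). h p)"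
  proof (rule sum.reindex[symmetric, unfolded comp_def])
    show "inj_on (\<lambda>q. GG P n (fst q) (snd q)) (Idx n \<times> {1..<2^n})"
    proof (rule inj_onI)
      fix q q' assume q: "q \<in> Idx n \<times> {1..<2^n}" and q': "q' \<in> Idx n \<times> {1..<2^n}"
        and e0: "GG P n (fst q) (snd q) = GG P n (fst q') (snd q')"
      obtain k z k' z' where qq: "q = (k,z)" "q' = (k',z')" by (cases q, cases q') auto
      have k: "k \<in> Idx n" and z: "z \<in> {1..<2^n}" and k': "k' \<in> Idx n" and z': "z' \<in> {1..<2^n}"
        using q q' qq by auto
      have e: "GG P n k z = GG P n k' z'" using e0 qq by simp
      have "k = k' \<and> z = z'"
      proof (cases k)
        case None
        then show ?thesis using e z' by (cases k') (auto simp: GG_def)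
      next
        case (Some v)
        show ?thesis
        proof (cases k')
          case None then show ?thesis using e z Some by (auto simp: GG_def)
        next
          case (Some v')
          have zz: "z = z'" using e Some \<open>k = Some v\<close> by (simp add: GG_def)
          have "v < 2^n" "v' < 2^n" using k k' Some \<open>k = Some v\<close> by (auto simp: Idx_def)
          moreover have "Fm (Amask P v) n z = Fm (Amask P v') n z" using e Some \<open>k = Some v\<close> zz by (simp add: GG_def)
          ultimately have "v = v'" using f_inj[OF irr n] z by auto
          then show ?thesis using zz Some \<open>k = Some v\<close> by simp
        qed
      qed
      then show "q = q'" using qq by simp
    qed
  qed
  also have "\<dots> \<le> (\<Sum>p\<in>{..<2^n} \<times> {..<2^n}. h p)"
  proof (rule sum_mono2)
    show "(\<lambda>q. GG P n (fst q) (snd q)) ` (Idx n \<times> {1..<2^n}) \<subseteq> {..<2^n} \<times> {..<2^n}"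
    proof (rule subsetI)
      fix p assume "p \<in> (\<lambda>q. GG P n (fst q) (snd q)) ` (Idx n \<times> {1..<2^n})"
      then obtain k z where k: "k \<in> Idx n" and z: "z \<in> {1..<(2::nat)^n}" and p: "p = GG P n k z" by auto
      show "p \<in> {..<2^n} \<times> {..<2^n}"
      proof (cases k)
        case None then show ?thesis using z p by (auto simp: GG_def)
      next
        case (Some v)
        have "Fm (Amask P v) n z < 2^n" using Amask_lt[of P v] n by (intro Fm_lt) auto
        then show ?thesis using z p Some by (auto simp: GG_def)
      qed
    qed
  qed (auto simp: h_def)
  also have "(\<Sum>p\<in>{..<2^n} \<times> {..<2^n}. h p) = (\<Sum>Q\<in>Paulis n. cmod (trace (Q * O0)))"
    by (simp add: Paulis_sum h_def)
  finally show ?thesis unfolding stab_norm_def O0_def by (simp add: divide_right_mono)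
qed



lemma var_bound:
  fixes p x :: "'a \<Rightarrow> real"
  assumes fin: "finite S" and p0: "\<And>s. s \<in> S \<Longrightarrow> p s \<ge> 0" and p1: "(\<Sum>s\<in>S. p s) = 1"
    and bd: "\<And>s. s \<in> S \<Longrightarrow> \<bar>x s - c\<bar> \<le> B"
  shows "(\<Sum>s\<in>S. p s * (x s - (\<Sum>t\<in>S. p t * x t))^2) \<le> B^2"
proof -
  define m where "m = (\<Sum>t\<in>S. p t * x t)"
  have px: "(\<Sum>s\<in>S. p s * (x s - c)) = m - c"
    unfolding m_def by (simp add: right_diff_distrib sum_subtractf sum_distrib_right[symmetric] p1)
  have "(\<Sum>s\<in>S. p s * (x s - m)^2) = (\<Sum>s\<in>S. p s * (x s - c)^2 - 2 * (m - c) * (p s * (x s - c)) + (m - c)^2 * p s)"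
    by (rule sum.cong) (simp_all add: power2_eq_square algebra_simps)
  also have "\<dots> = (\<Sum>s\<in>S. p s * (x s - c)^2) - 2 * (m - c) * (\<Sum>s\<in>S. p s * (x s - c)) + (m - c)^2 * (\<Sum>s\<in>S. p s)"
    by (simp add: sum.distrib sum_subtractf sum_distrib_left)
  also have "\<dots> = (\<Sum>s\<in>S. p s * (x s - c)^2) - (m - c)^2"
    using px p1 by (simp add: power2_eq_square)
  also have "\<dots> \<le> (\<Sum>s\<in>S. p s * (x s - c)^2)" by simp
  also have "\<dots> \<le> (\<Sum>s\<in>S. p s * B^2)"
  proof (rule sum_mono)
    fix s assume s: "s \<in> S"
    have "(x s - c)^2 \<le> B^2" using bd[OF s] by (metis abs_ge_zero order_trans power2_abs power_mono)
    then show "p s * (x s - c)^2 \<le> p s * B^2" using p0[OF s] by (rule mult_left_mono)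
  qed
  also have "\<dots> = B^2" using p1 by (simp add: sum_distrib_right[symmetric])
  finally show ?thesis unfolding m_def .
qed

lemma diag_quad: fixes W R :: "complex mat" assumes W: "W \<in> carrier_mat (2^n) (2^n)" and R: "R \<in> carrier_mat (2^n) (2^n)" and b: "b < 2^n"
  shows "(W * R * mat_adjoint W) $$ (b,b) = (R *\<^sub>v col (mat_adjoint W) b) \<bullet>c col (mat_adjoint W) b"
proof -
  have "(W * R * mat_adjoint W) $$ (b,b) = (\<Sum>j<2^n. (\<Sum>i<2^n. W $$ (b,i) * R $$ (i,j)) * cnj (W $$ (b,j)))"
    using W R b by (simp add: scalar_prod_def atLeast0LessThan)
  also have "\<dots> = (\<Sum>j<2^n. \<Sum>i<2^n. W $$ (b,i) * R $$ (i,j) * cnj (W $$ (b,j)))"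
    by (simp add: sum_distrib_right)
  also have "\<dots> = (\<Sum>i<2^n. \<Sum>j<2^n. W $$ (b,i) * R $$ (i,j) * cnj (W $$ (b,j)))"
    by (rule sum.swap)
  also have "\<dots> = (\<Sum>i<2^n. (\<Sum>j<2^n. R $$ (i,j) * cnj (W $$ (b,j))) * W $$ (b,i))"
    by (rule sum.cong[OF refl]) (simp add: sum_distrib_left sum_distrib_right mult.commute mult.left_commute)
  also have "\<dots> = (R *\<^sub>v col (mat_adjoint W) b) \<bullet>c col (mat_adjoint W) b"
    using W R b by (simp add: scalar_prod_def atLeast0LessThan)
  finally show ?thesis .
qed

lemma trace_conj: assumes W: "unitary_mat n W" and R: "R \<in> carrier_mat (2^n) (2^n)"
  shows "trace (W * R * mat_adjoint W) = trace R"
proof -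
  have Wc: "W \<in> carrier_mat (2^n) (2^n)" and u2: "mat_adjoint W * W = 1\<^sub>m (2^n)"
    using unitaryD[OF W] by auto
  have "trace (W * R * mat_adjoint W) = trace (mat_adjoint W * (W * R))"
    by (rule trace_comm[of _ "2^n" "2^n"]) (use Wc R in auto)
  also have "mat_adjoint W * (W * R) = mat_adjoint W * W * R"
    using assoc_mult_mat[OF adj_carrier[OF Wc] Wc R] by simp
  also have "\<dots> = R" using u2 R by simp
  finally show ?thesis .
qed



theorem theorem3:
  fixes P :: "gf2 poly" and n :: nat and U :: "nat \<Rightarrow> complex mat"
    and Ob \<rho> :: "complex mat"
  assumes "irreducible P" and "degree P = n"
    and "\<forall>v < 2^n. clifford n (U v) \<and>
           (\<forall>i < n. mat_adjoint (U v) * Zq n i * U v = gen P v i \<or>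
                    mat_adjoint (U v) * Zq n i * U v = - gen P v i)"
    and "hermitian_mat n Ob" and "\<not> (\<exists>c. Ob = c \<cdot>\<^sub>m 1\<^sub>m (2^n))"
    and "density_mat n \<rho>"
  shows "est_var n U Ob \<rho> \<le> (Bsum n U Ob)^2 \<and>
         (Bsum n U Ob)^2 \<le> (stab_norm n (traceless n Ob))^2"
proof -
  note irr = assms(1) and nP = assms(2) and Uh = assms(3)
  have Obc: "Ob \<in> carrier_mat (2^n) (2^n)" using assms(4) unfolding hermitian_mat_def by simp
  have rc: "\<rho> \<in> carrier_mat (2^n) (2^n)" and tr1: "trace \<rho> = 1"
    and psd: "\<forall>v \<in> carrier_vec (2^n). 0 \<le> Re ((\<rho> *\<^sub>v v) \<bullet>c v)"
    using assms(6) unfolding density_mat_def hermitian_mat_def by auto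
  have bnd: "Bsum n U Ob \<le> stab_norm n (traceless n Ob)"
    by (rule Bsum_bound[OF irr nP Uh Obc])
  have Bs0: "Bsum n U Ob \<ge> 0" unfolding Bsum_def by (rule sum_nonneg) (rule Bval_nonneg)
  have part2: "(Bsum n U Ob)^2 \<le> (stab_norm n (traceless n Ob))^2"
    using bnd Bs0 by (rule power_mono)
  define K where "K = {k \<in> Idx n. pU n U Ob k > 0}"
  define S where "S = outcomes n U Ob"
  have S_def': "S = K \<times> {..<2^n}" unfolding S_def outcomes_def K_def by simp
  have pU0: "pU n U Ob k \<ge> 0" for k
    unfolding pU_def using Bval_nonneg Bs0 by simp
  have part1: "est_var n U Ob \<rho> \<le> (Bsum n U Ob)^2"
  proof (cases "K = {}")
    case True
    then have "S = {}" unfolding S_def' by simp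
    then show ?thesis unfolding est_var_def S_def[symmetric] by simp
  next
    case False
    then obtain k0 where "k0 \<in> K" by auto
    then have "pU n U Ob k0 > 0" unfolding K_def by simp
    then have "Bsum n U Ob \<noteq> 0" unfolding pU_def by auto
    then have Bpos: "Bsum n U Ob > 0" using Bs0 by simp
    have unit: "unitary_mat n (ens n U k)" if k: "k \<in> Idx n" for k
    proof (cases k)
      case None then show ?thesis by (simp add: ens_def unitary_mat_def)
    next
      case (Some v) then have "v < 2^n" using k by (auto simp: Idx_def)
      then show ?thesis using Uh Some by (auto simp: ens_def clifford_def)
    qed
    define q where "q k b = Re ((ens n U k * \<rho> * mat_adjoint (ens n U k)) $$ (b, b))" for k b
    have qnn: "q k b \<ge> 0" if k: "k \<in> Idx n" and b: "b < 2^n" for k b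
    proof -
      have Wc: "ens n U k \<in> carrier_mat (2^n) (2^n)" using unitaryD[OF unit[OF k]] by simp
      have "col (mat_adjoint (ens n U k)) b \<in> carrier_vec (2^n)"
        using Wc by (auto intro!: carrier_vecI)
      then show ?thesis unfolding q_def using diag_quad[OF Wc rc b] psd by simp
    qed
    have qsum: "(\<Sum>b<2^n. q k b) = 1" if k: "k \<in> Idx n" for k
    proof -
      have Wc: "ens n U k \<in> carrier_mat (2^n) (2^n)" using unitaryD[OF unit[OF k]] by simp
      have "(\<Sum>b<2^n. q k b) = Re (trace (ens n U k * \<rho> * mat_adjoint (ens n U k)))"
        unfolding q_def trace_def using Wc rc by (simp add: Re_sum)
      also have "\<dots> = 1" using trace_conj[OF unit[OF k] rc] tr1 by simp
      finally show ?thesis .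
    qed
    define p where "p s = prob n U Ob \<rho> (fst s) (snd s)" for s
    define x where "x s = est n U Ob (fst s) (snd s)" for s
    have finS: "finite S" unfolding S_def' K_def by simp
    have p0: "p s \<ge> 0" if s: "s \<in> S" for s
    proof -
      have "fst s \<in> Idx n" "snd s < 2^n" using s unfolding S_def' K_def by auto
      then show ?thesis unfolding p_def prob_def using qnn pU0 q_def by simp
    qed
    have p1: "(\<Sum>s\<in>S. p s) = 1"
    proof -
      have "(\<Sum>s\<in>S. p s) = (\<Sum>k\<in>K. \<Sum>b<2^n. pU n U Ob k * q k b)"
        unfolding S_def' p_def prob_def q_def by (simp add: sum.cartesian_product split_def)
      also have "\<dots> = (\<Sum>k\<in>K. pU n U Ob k)"
        by (rule sum.cong[OF refl]) (simp add: sum_distrib_left[symmetric] qsum K_def)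
      also have "\<dots> = (\<Sum>k\<in>Idx n. pU n U Ob k)"
      proof (rule sum.mono_neutral_left)
        show "\<forall>i\<in>Idx n - K. pU n U Ob i = 0" using pU0 unfolding K_def
          by (metis (mono_tags, lifting) DiffE less_eq_real_def mem_Collect_eq)
      qed (auto simp: K_def)
      also have "\<dots> = Bsum n U Ob / Bsum n U Ob"
        unfolding pU_def by (simp add: sum_divide_distrib[symmetric] Bsum_def)
      also have "\<dots> = 1" using Bpos by simp
      finally show ?thesis .
    qed
    define c where "c = Re (trace Ob) / 2^n"
    have bd: "\<bar>x s - c\<bar> \<le> Bsum n U Ob" if s: "s \<in> S" for s
    proof -
      obtain k b where sk: "s = (k,b)" by (cases s)
      have k: "k \<in> Idx n" and pk: "pU n U Ob k > 0" and b: "b < 2^n"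
        using s sk unfolding S_def' K_def by auto
      let ?W = "ens n U k"
      have Wc: "?W \<in> carrier_mat (2^n) (2^n)" using unitaryD[OF unit[OF k]] by simp
      have Phic: "Phi n ?W b \<in> carrier_mat (2^n) (2^n)" unfolding Phi_def using Wc by auto
      have O0c: "traceless n Ob \<in> carrier_mat (2^n) (2^n)" by (rule traceless_carrier[OF Obc])
      have "x s - c = Re (trace (traceless n Ob * Phi n ?W b)) / pU n U Ob k"
        unfolding x_def c_def sk est_def by simp
      then have "\<bar>x s - c\<bar> = \<bar>Re (trace (traceless n Ob * Phi n ?W b))\<bar> / pU n U Ob k"
        using pk by simp
      also have "\<dots> \<le> cmod (trace (traceless n Ob * Phi n ?W b)) / pU n U Ob k"
        using pk by (intro divide_right_mono abs_Re_le_cmod) simp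
      also have "trace (traceless n Ob * Phi n ?W b) = trace (Phi n ?W b * traceless n Ob)"
        by (rule trace_comm[OF O0c Phic])
      also have "cmod (trace (Phi n ?W b * traceless n Ob)) / pU n U Ob k \<le> Bval n Ob ?W / pU n U Ob k"
        using pk Bval_ge[OF b] by (intro divide_right_mono) auto
      also have "\<dots> = Bsum n U Ob"
        using pk Bpos unfolding pU_def by (auto simp: field_simps)
      finally show ?thesis .
    qed
    have "est_var n U Ob \<rho> = (\<Sum>s\<in>S. p s * (x s - (\<Sum>t\<in>S. p t * x t))^2)"
      unfolding est_var_def est_mean_def S_def p_def x_def by (simp add: split_def)
    also have "\<dots> \<le> (Bsum n U Ob)^2"
      by (rule var_bound[OF finS p0 p1 bd])
    finally show ?thesis .
  qed
  show ?thesis using part1 part2 by simp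
qed


end
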